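(* For every integer $n\ge 2$, let $a_o$ (resp. $a_e$) be the total number of odd (resp. even) parts, counted with multiplicity, over all partitions in $\mathcal{H}_n$. Then $$a_o=(n+2)\cdot 2^{n-3}\qquad\text{and}\qquad a_e=n\cdot 2^{n-3}.$$
   Context: A partition is a finite nonempty weakly decreasing sequence $\lambda=(\lambda_1,\ldots,\lambda_k)$ of positive integers; $\ell(\lambda)=k$. The perimeter is $\Gamma(\lambda)=\lambda_1+\ell(\lambda)-1$; $\mathcal{H}_n$ is the set of partitions with perimeter $n$. *)

theory Defs
  imports Complex_Main
begin

definition is_partition :: "nat list \<Rightarrow> bool" where
  "is_partition la \<longleftrightarrow> la \<noteq> [] \<and> sorted_wrt (\<ge>) la \<and> (\<forall>x\<in>set la. 0 < x)"

definition perimeter :: "nat list \<Rightarrow> nat" where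
  "perimeter la = hd la + length la - 1"

definition H :: "nat \<Rightarrow> nat list set" where
  "H n = {la. is_partition la \<and> perimeter la = n}"

definition a_odd :: "nat \<Rightarrow> nat" where
  "a_odd n = (\<Sum>la\<in>H n. length (filter odd la))"

definition a_even :: "nat \<Rightarrow> nat" where
  "a_even n = (\<Sum>la\<in>H n. length (filter even la))"

end

theory Submission
  imports Defs
begin

definition fA :: "nat list \<Rightarrow> nat list" where "fA m = hd m # m"
definition fB :: "nat list \<Rightarrow> nat list" where "fB m = Suc (hd m) # tl m"

lemma fA_in: assumes "m \<in> H n" shows "fA m \<in> H (Suc n)"
proof -
  obtain x xs where m: "m = x # xs" using assms unfolding H_def is_partition_def
    by (cases m) auto
  show ?thesis using assms unfolding H_def is_partition_def perimeter_def fA_def m by auto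
qed

lemma fB_in: assumes "m \<in> H n" shows "fB m \<in> H (Suc n)"
proof -
  obtain x xs where m: "m = x # xs" using assms unfolding H_def is_partition_def
    by (cases m) auto
  show ?thesis using assms unfolding H_def is_partition_def perimeter_def fB_def m
    by (auto simp: le_Suc_eq)
qed

lemma H_Suc_sub: assumes "n \<ge> 1" "l \<in> H (Suc n)"
  shows "l \<in> fA ` H n \<union> fB ` H n"
proof -
  obtain x xs where l: "l = x # xs" using assms unfolding H_def is_partition_def
    by (cases l) auto
  have sw: "sorted_wrt (\<ge>) (x#xs)" and pos: "\<forall>y\<in>set (x#xs). 0 < y"
    and per: "x + length xs = Suc n"
    using assms(2) unfolding H_def is_partition_def perimeter_def l by auto
  show ?thesis
  proof (cases "xs \<noteq> [] \<and> hd xs = x")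
    case True
    then obtain ys where xs: "xs = x # ys" by (cases xs) auto
    have "xs \<in> H n" using sw pos per unfolding H_def is_partition_def perimeter_def xs by auto
    moreover have "l = fA xs" unfolding fA_def l xs by simp
    ultimately show ?thesis by blast
  next
    case False
    have x2: "x \<ge> 2"
    proof (cases xs)
      case Nil then show ?thesis using per assms(1) by simp
    next
      case (Cons y ys)
      then have "y < x" using False sw by auto
      moreover have "y > 0" using pos Cons by auto
      ultimately show ?thesis by simp
    qed
    have le: "\<forall>y\<in>set xs. y \<le> x - 1"
    proof
      fix y assume y: "y \<in> set xs"
      then obtain z zs where xs: "xs = z # zs" by (cases xs) auto
      have "z < x" using False sw xs by auto
      moreover have "y \<le> z" using y sw xs by auto
      ultimately show "y \<le> x - 1" by simp
    qed
    have "(x - 1) # xs \<in> H n" using sw pos per le x2 unfolding H_def is_partition_def perimeter_def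
      by auto
    moreover have "l = fB ((x - 1) # xs)" unfolding fB_def l using x2 by simp
    ultimately show ?thesis by blast
  qed
qed

lemma H_Suc: assumes "n \<ge> 1" shows "H (Suc n) = fA ` H n \<union> fB ` H n"
  using H_Suc_sub[OF assms] fA_in fB_in by blast

lemma H_nonempty: "m \<in> H n \<Longrightarrow> m \<noteq> []"
  unfolding H_def is_partition_def by auto

lemma disj: "fA ` H n \<inter> fB ` H n = {}"
proof -
  { fix a b assume "a \<in> H n" "b \<in> H n" "fA a = fB b"
    then have False using H_nonempty[of b n] H_nonempty[of a n] unfolding fA_def fB_def H_def is_partition_def
      by (cases a; cases b) auto }
  then show ?thesis by blast
qed

lemma injA: "inj_on fA (H n)"
  unfolding inj_on_def fA_def by auto

lemma injB: "inj_on fB (H n)"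
proof -
  { fix a b assume "a \<in> H n" "b \<in> H n" "fB a = fB b"
    then have "a = b" using H_nonempty[of b n] H_nonempty[of a n] unfolding fB_def
      by (cases a; cases b) auto }
  then show ?thesis unfolding inj_on_def by blast
qed

lemma H1: "H 1 = {[1]}"
proof -
  { fix l assume "l \<in> H 1"
    then have "l = [1]" unfolding H_def is_partition_def perimeter_def
      by (cases l) (auto simp: add_is_1) }
  moreover have "[1] \<in> H 1" unfolding H_def is_partition_def perimeter_def by auto
  ultimately show ?thesis by blast
qed

lemma finH: "n \<ge> 1 \<Longrightarrow> finite (H n)"
proof (induction n rule: dec_induct)
  case base then show ?case using H1 by simp
next
  case (step n) then show ?case using H_Suc[of n] by simp
qed

lemma sum_Suc: assumes "n \<ge> 1"
  shows "(\<Sum>l\<in>H (Suc n). g l) = (\<Sum>m\<in>H n. g (fA m)) + (\<Sum>m\<in>H n. g (fB m))"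
proof -
  have f: "finite (H n)" using finH assms by simp
  have "(\<Sum>l\<in>H (Suc n). g l) = (\<Sum>l\<in>fA ` H n. g l) + (\<Sum>l\<in>fB ` H n. g l)"
    unfolding H_Suc[OF assms] using f disj by (simp add: sum.union_disjoint)
  also have "\<dots> = (\<Sum>m\<in>H n. g (fA m)) + (\<Sum>m\<in>H n. g (fB m))"
    using injA injB by (simp add: sum.reindex)
  finally show ?thesis .
qed

definition PP :: "nat \<Rightarrow> nat" where "PP n = (\<Sum>l\<in>H n. if odd (hd l) then 1 else 0)"
definition QQ :: "nat \<Rightarrow> nat" where "QQ n = (\<Sum>l\<in>H n. if even (hd l) then 1 else 0)"

lemma cnt_split: "m \<noteq> [] \<Longrightarrow> length (filter P m) = (if P (hd m) then 1 else 0) + length (filter P (tl m))"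
  by (cases m) auto

lemma pt: "m \<noteq> [] \<Longrightarrow> length (filter P m) + (if P (hd m) then 1 else 0) +
   ((if \<not> P (hd m) then 1 else 0) + length (filter P (tl m))) =
   2 * length (filter P m) + (if \<not> P (hd m) then 1 else 0)"
  by (cases m) auto

lemma main: "n \<ge> 2 \<Longrightarrow> a_odd n * 8 = (n + 2) * 2 ^ n \<and> a_even n * 8 = n * 2 ^ n
   \<and> PP n * 4 = 2 ^ n \<and> QQ n * 4 = 2 ^ n"
proof (induction n rule: dec_induct)
  case base
  have H2: "H 2 = {[2],[1,1]}"
    using H_Suc[of 1] H1 by (simp add: fA_def fB_def numeral_2_eq_2)
  show ?case unfolding a_odd_def a_even_def PP_def QQ_def H2 by simp
next
  case (step n)
  have n1: "n \<ge> 1" using step by simp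
  have ne: "\<And>m. m \<in> H n \<Longrightarrow> m \<noteq> []" by (rule H_nonempty)
  have o: "a_odd (Suc n) = 2 * a_odd n + QQ n"
  proof -
    have "a_odd (Suc n) = (\<Sum>m\<in>H n. length (filter odd m) + (if odd (hd m) then 1 else 0))
       + (\<Sum>m\<in>H n. (if even (hd m) then 1 else 0) + length (filter odd (tl m)))"
      unfolding a_odd_def sum_Suc[OF n1] fA_def fB_def
      by (intro arg_cong2[where f="(+)"] sum.cong) auto
    also have "\<dots> = (\<Sum>m\<in>H n. 2 * length (filter odd m) + (if even (hd m) then 1 else 0))"
      unfolding sum.distrib[symmetric]
      by (rule sum.cong) (auto dest!: ne simp: neq_Nil_conv)
    finally show ?thesis unfolding a_odd_def QQ_def sum.distrib sum_distrib_left by simp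
  qed
  have e: "a_even (Suc n) = 2 * a_even n + PP n"
  proof -
    have "a_even (Suc n) = (\<Sum>m\<in>H n. length (filter even m) + (if even (hd m) then 1 else 0))
       + (\<Sum>m\<in>H n. (if odd (hd m) then 1 else 0) + length (filter even (tl m)))"
      unfolding a_even_def sum_Suc[OF n1] fA_def fB_def
      by (intro arg_cong2[where f="(+)"] sum.cong) auto
    also have "\<dots> = (\<Sum>m\<in>H n. 2 * length (filter even m) + (if odd (hd m) then 1 else 0))"
      unfolding sum.distrib[symmetric]
      by (rule sum.cong) (auto dest!: ne simp: neq_Nil_conv)
    finally show ?thesis unfolding a_even_def PP_def sum.distrib sum_distrib_left by simp
  qed
  have p: "PP (Suc n) = PP n + QQ n"
    unfolding PP_def QQ_def sum_Suc[OF n1] fA_def fB_def by simp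
  have q: "QQ (Suc n) = QQ n + PP n"
    unfolding PP_def QQ_def sum_Suc[OF n1] fA_def fB_def by simp
  show ?case using step.IH unfolding o e p q by (simp add: algebra_simps)
qed

theorem corollary2p6:
  fixes n :: nat
  assumes "n \<ge> 2"
  shows "real (a_odd n) = (real n + 2) * 2 powi (int n - 3) \<and>
         real (a_even n) = real n * 2 powi (int n - 3)"
proof -
  have pw: "(2::real) powi (int n - 3) = 2 ^ n / 8"
    by (simp add: power_int_diff power_int_of_nat)
  have m: "real (a_odd n) * 8 = (real n + 2) * 2 ^ n" "real (a_even n) * 8 = real n * 2 ^ n"
    using main[OF assms] by (metis of_nat_add of_nat_mult of_nat_numeral of_nat_power)+
  show ?thesis unfolding pw using m by (auto simp: field_simps)
qed

end
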